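(* Let $(X,d)$ be a metric space and $T:X\to X$ a map. The system $(X,T)$ has sensitive dependence on initial conditions if and only if there is $\delta>0$ such that $r_\delta(x)$ is infinitesimal (in $\mathcal R$) for every $x\in X$.
   Context: $(X,T)$ has sensitive dependence on initial conditions if there is $\delta>0$ such that for every $x\in X$ and every neighborhood $U$ of $x$ there are $y\in U$ and $k\in\mathbb N$ with $d(T^k(x),T^k(y))>\delta$. For $x\in X$, $n\in\mathbb N$, $\epsilon>0$: $B(n,x,\epsilon)=\{y\in X: d(T^i(y),T^i(x))\le\epsilon \text{ for all } 0\le i\le n\}$ and $r(x,n,\epsilon)=\sup\{r>0: B_r(x)\subset B(n,x,\epsilon)\}$, where $B_r(x)$ is the open ball. Hyperreals: $\mathbb R^*$ is an ordered field containing $\mathbb R$, with a surjective ring homomorphism $J:\mathbb R^{\mathbb N}\to\mathbb R^*$ satisfying: if $a\in\mathbb R$ and there is $k\ge1$ with $\phi_{kn}\ge a$ for all $n\ge1$ then $J(\phi)\ge a$. $\xi\in\mathbb R^*$ is bounded if $|\xi|<k$ for some $k\in\mathbb N$. For nonzero $a,b$, $a\simeq b$ iff $a/b$, $b/a$ are bounded; $[a]$ is the class; $\mathbb R^*/{\simeq}$ is ordered by $[a]\le[b]$ iff for all $x\in[a],y\in[b]$, $x\simeq y$ or $x<y$. $\mathcal R$ is the totally ordered set of equivalence classes of monotone sequences in $\mathbb R^*/{\simeq}$ under $(a_i)\approx(b_j)$ iff neither $(a_i)<(b_j)$ nor $(b_j)<(a_i)$, where $(a_i)<(b_j)$ iff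 $\exists M$ with $a_n<b_m$ for all $n,m>M$; $\mathbb R^*/{\simeq}$ embeds into $\mathcal R$ as constant sequences. $r_\epsilon(x)=[J((r(x,n,\epsilon))_n)]$. An element of $\mathcal R$ is infinitesimal if it is strictly less than $c=[J(v)]$, the class of a constant sequence with value $v>0$ (the class of bounded, non-infinitesimal hyperreals). *)

theory Defs
  imports "HOL-Analysis.Analysis"
begin

definition sensitive :: "('a::metric_space \<Rightarrow> 'a) \<Rightarrow> bool" where
  "sensitive T \<longleftrightarrow> (\<exists>\<delta>>0. \<forall>x. \<forall>U. open U \<and> x \<in> U \<longrightarrow>
      (\<exists>y\<in>U. \<exists>k::nat. dist ((T ^^ k) x) ((T ^^ k) y) > \<delta>))"

definition bowen_ball :: "('a::metric_space \<Rightarrow> 'a) \<Rightarrow> nat \<Rightarrow> 'a \<Rightarrow> real \<Rightarrow> 'a set" where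
  "bowen_ball T n x \<epsilon> = {y. \<forall>i\<le>n. dist ((T ^^ i) y) ((T ^^ i) x) \<le> \<epsilon>}"

text \<open>r(x,n,eps) = sup of admissible radii.  Conventions:
  empty set of radii gives 0; an unbounded set of radii (i.e. the supremum is +infinity)
  is represented by the positive value 1.\<close>
definition rad :: "('a::metric_space \<Rightarrow> 'a) \<Rightarrow> 'a \<Rightarrow> nat \<Rightarrow> real \<Rightarrow> real" where
  "rad T x n \<epsilon> = (let S = {r. 0 < r \<and> ball x r \<subseteq> bowen_ball T n x \<epsilon>} in
      if S = {} then 0 else if \<not> bdd_above S then 1 else Sup S)"

text \<open>J : R^N -> R* a surjective (unital) ring homomorphism onto an ordered field; the real a
  is identified with J of the constant sequence a.\<close>
definition hyper_J :: "((nat \<Rightarrow> real) \<Rightarrow> 'h::linordered_field) \<Rightarrow> bool" where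
  "hyper_J J \<longleftrightarrow>
     (\<forall>\<phi> \<psi>. J (\<lambda>n. \<phi> n + \<psi> n) = J \<phi> + J \<psi>) \<and>
     (\<forall>\<phi> \<psi>. J (\<lambda>n. \<phi> n * \<psi> n) = J \<phi> * J \<psi>) \<and>
     J (\<lambda>n. 1) = 1 \<and>
     surj J \<and>
     (\<forall>\<phi> (a::real). (\<exists>k::nat\<ge>1. \<forall>n::nat\<ge>1. \<phi> (k * n) \<ge> a) \<longrightarrow> J \<phi> \<ge> J (\<lambda>n. a))"

definition hbounded :: "'h::linordered_field \<Rightarrow> bool" where
  "hbounded \<xi> \<longleftrightarrow> (\<exists>k::nat. \<bar>\<xi>\<bar> < of_nat k)"

definition hsim :: "'h::linordered_field \<Rightarrow> 'h \<Rightarrow> bool" where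
  "hsim a b \<longleftrightarrow> a \<noteq> 0 \<and> b \<noteq> 0 \<and> hbounded (a / b) \<and> hbounded (b / a)"

definition hcls :: "'h::linordered_field \<Rightarrow> 'h set" where
  "hcls a = {b. 0 < b \<and> hsim a b}"

definition cls_le :: "'h::linordered_field set \<Rightarrow> 'h set \<Rightarrow> bool" where
  "cls_le A B \<longleftrightarrow> (\<forall>x\<in>A. \<forall>y\<in>B. hsim x y \<or> x < y)"

definition cls_less :: "'h::linordered_field set \<Rightarrow> 'h set \<Rightarrow> bool" where
  "cls_less A B \<longleftrightarrow> cls_le A B \<and> A \<noteq> B"

text \<open>Strict order on (representatives of) elements of the set of monotone sequences of classes.\<close>
definition seq_less :: "(nat \<Rightarrow> 'h::linordered_field set) \<Rightarrow> (nat \<Rightarrow> 'h set) \<Rightarrow> bool" where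
  "seq_less s t \<longleftrightarrow> (\<exists>M. \<forall>n m. n > M \<longrightarrow> m > M \<longrightarrow> cls_less (s n) (t m))"

text \<open>c = [J(v)] with v = 1 (any v > 0 gives the same class).\<close>
definition c_cls :: "((nat \<Rightarrow> real) \<Rightarrow> 'h::linordered_field) \<Rightarrow> 'h set" where
  "c_cls J = hcls (J (\<lambda>n. 1))"

definition infinitesimal_R :: "((nat \<Rightarrow> real) \<Rightarrow> 'h::linordered_field) \<Rightarrow> (nat \<Rightarrow> 'h set) \<Rightarrow> bool" where
  "infinitesimal_R J s \<longleftrightarrow> seq_less s (\<lambda>i. c_cls J)"

text \<open>r_eps(x) = [J((r(x,n,eps))_n)], an element of R*/~ (embedded in R as a constant sequence).\<close>
definition r_cls :: "((nat \<Rightarrow> real) \<Rightarrow> 'h::linordered_field) \<Rightarrow> ('a::metric_space \<Rightarrow> 'a) \<Rightarrow> real \<Rightarrow> 'a \<Rightarrow> 'h set" where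
  "r_cls J T \<epsilon> x = hcls (J (\<lambda>n. rad T x n \<epsilon>))"

end

theory Submission
  imports Defs
begin

lemma J_add: "hyper_J J \<Longrightarrow> J (\<lambda>n. \<phi> n + \<psi> n) = J \<phi> + J \<psi>"
  unfolding hyper_J_def by blast
lemma J_mult: "hyper_J J \<Longrightarrow> J (\<lambda>n. \<phi> n * \<psi> n) = J \<phi> * J \<psi>"
  unfolding hyper_J_def by blast
lemma J_one: "hyper_J J \<Longrightarrow> J (\<lambda>n. 1) = 1"
  unfolding hyper_J_def by blast
lemma J_cond: "hyper_J J \<Longrightarrow> k \<ge> 1 \<Longrightarrow> (\<And>n. n \<ge> 1 \<Longrightarrow> \<phi> (k * n) \<ge> a) \<Longrightarrow> J \<phi> \<ge> J (\<lambda>n. a)"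
  unfolding hyper_J_def by blast

lemma J_zero: assumes "hyper_J J" shows "J (\<lambda>n. 0) = 0"
proof -
  have "J (\<lambda>n. 0 + 0) = J (\<lambda>n. 0) + J (\<lambda>n. 0)" using J_add[OF assms] .
  then show ?thesis by simp
qed

lemma J_uminus: assumes "hyper_J J" shows "J (\<lambda>n. - \<phi> n) = - J \<phi>"
proof -
  have "J (\<lambda>n. \<phi> n + - \<phi> n) = J \<phi> + J (\<lambda>n. - \<phi> n)" using J_add[OF assms] .
  then show ?thesis using J_zero[OF assms] by (simp add: eq_neg_iff_add_eq_0)
qed

lemma J_diff: assumes "hyper_J J" shows "J (\<lambda>n. \<phi> n - \<psi> n) = J \<phi> - J \<psi>"
proof -
  have "J (\<lambda>n. \<phi> n + - \<psi> n) = J \<phi> + J (\<lambda>n. - \<psi> n)" using J_add[OF assms] .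
  then show ?thesis using J_uminus[OF assms, of \<psi>] by simp
qed

lemma J_nat: assumes "hyper_J J" shows "J (\<lambda>n. real k) = of_nat k"
proof (induction k)
  case 0 then show ?case using J_zero[OF assms] by simp
next
  case (Suc k)
  have "J (\<lambda>n. 1 + real k) = J (\<lambda>n. 1) + J (\<lambda>n. real k)" using J_add[OF assms] .
  then show ?case using Suc J_one[OF assms] by simp
qed

lemma J_ge_ev: assumes "hyper_J J" "\<And>n. n \<ge> N \<Longrightarrow> \<phi> n \<ge> a" shows "J \<phi> \<ge> J (\<lambda>n. a)"
proof (rule J_cond[OF assms(1), of "N+1"])
  fix n :: nat assume "n \<ge> 1"
  then have "(N+1) * n \<ge> N" by (metis le_add1 mult.commute mult_le_mono1 mult_1 order_trans)
  then show "\<phi> ((N+1) * n) \<ge> a" using assms(2) by blast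
qed simp

lemma J_const_inv: assumes "hyper_J J" "c \<noteq> 0" shows "J (\<lambda>n. c) * J (\<lambda>n. 1/c) = 1"
proof -
  have "J (\<lambda>n. c * (1/c)) = J (\<lambda>n. c) * J (\<lambda>n. 1/c)" using J_mult[OF assms(1)] .
  then show ?thesis using assms J_one[OF assms(1)] by simp
qed

lemma J_const_pos: assumes "hyper_J J" "c > 0" shows "J (\<lambda>n. c) > 0"
proof -
  have "J (\<lambda>n. c) \<ge> J (\<lambda>n. 0)" by (rule J_ge_ev[OF assms(1), of 0]) (use assms in auto)
  moreover have "J (\<lambda>n. c) \<noteq> 0" using J_const_inv[OF assms(1), of c] assms by auto
  ultimately show ?thesis using J_zero[OF assms(1)] by simp
qed

lemma hbounded_mult: assumes "hbounded a" "hbounded b" shows "hbounded (a * b)"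
proof -
  obtain k where k: "\<bar>a\<bar> < of_nat k" using assms(1) hbounded_def by blast
  obtain m where m: "\<bar>b\<bar> < of_nat m" using assms(2) hbounded_def by blast
  have "\<bar>a*b\<bar> = \<bar>a\<bar> * \<bar>b\<bar>" by (simp add: abs_mult)
  also have "\<dots> < of_nat k * of_nat m"
    by (rule mult_strict_mono') (use k m in auto)
  finally show ?thesis unfolding hbounded_def by (metis of_nat_mult)
qed

lemma hbounded_one: "hbounded (1::'h::linordered_field)"
  unfolding hbounded_def by (rule exI[of _ 2]) simp

lemma hsim_refl: "a \<noteq> 0 \<Longrightarrow> hsim a a"
  unfolding hsim_def using hbounded_one by simp

lemma hsim_trans1: assumes "hsim a x" "hsim a b" shows "hsim b x"
proof -
  have "x / b = (x / a) * (a / b)" using assms unfolding hsim_def by simp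
  moreover have "b / x = (b / a) * (a / x)" using assms unfolding hsim_def by simp
  ultimately show ?thesis using assms hbounded_mult unfolding hsim_def by metis
qed

lemma infl_pos:
  fixes a :: "'h::linordered_field"
  assumes "0 \<le> a" "\<And>m::nat. m > 0 \<Longrightarrow> a * of_nat m < 1"
  shows "cls_less (hcls a) (hcls 1)"
proof (cases "a = 0")
  case True
  then have "hcls a = {}" unfolding hcls_def hsim_def by simp
  moreover have "(1::'h) \<in> hcls 1" unfolding hcls_def using hsim_refl[of "1::'h"] by simp
  ultimately show ?thesis unfolding cls_less_def cls_le_def by auto
next
  case False
  then have apos: "a > 0" using assms(1) by simp
  have le: "cls_le (hcls a) (hcls 1)" unfolding cls_le_def
  proof (intro ballI disjI2)
    fix x y :: 'h assume x: "x \<in> hcls a" and y: "y \<in> hcls 1"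
    from x have xp: "x > 0" and "hbounded (x / a)" unfolding hcls_def hsim_def by auto
    then obtain K where K: "\<bar>x / a\<bar> < of_nat K" unfolding hbounded_def by blast
    from y have yp: "y > 0" and "hbounded (1 / y)" unfolding hcls_def hsim_def by auto
    then obtain L where L: "\<bar>1 / y\<bar> < of_nat L" unfolding hbounded_def by blast
    have K0: "K > 0" using K by (metis abs_ge_zero of_nat_0 leD neq0_conv)
    have L0: "L > 0" using L by (metis abs_ge_zero of_nat_0 leD neq0_conv)
    have "x < of_nat K * a" using K apos xp by (simp add: field_simps)
    moreover have "1 / of_nat L < y" using L yp L0 by (simp add: field_simps)
    moreover have "of_nat K * a < 1 / of_nat L"
    proof -
      have "a * of_nat (K * L) < 1" using assms(2)[of "K*L"] K0 L0 by simp
      then show ?thesis using L0 by (simp add: field_simps)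
    qed
    ultimately show "x < y" by linarith
  qed
  have "a \<in> hcls a" unfolding hcls_def using apos hsim_refl[of a] by simp
  moreover have "a \<notin> hcls 1"
  proof
    assume "a \<in> hcls 1"
    then have "hbounded (1 / a)" unfolding hcls_def hsim_def by simp
    then obtain L where L: "\<bar>1 / a\<bar> < of_nat L" unfolding hbounded_def by blast
    then have "1 < a * of_nat L" using apos by (simp add: field_simps)
    moreover have "L > 0" using L by (metis abs_ge_zero of_nat_0 leD neq0_conv)
    ultimately show False using assms(2)[of L] by simp
  qed
  ultimately show ?thesis using le unfolding cls_less_def by auto
qed

lemma infl_neg:
  fixes a :: "'h::linordered_field"
  assumes "\<gamma> > 0" "a \<ge> \<gamma>" "hbounded (1 / \<gamma>)"
  shows "\<not> cls_less (hcls a) (hcls 1)"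
proof (cases "hbounded a")
  case False
  have "a \<in> hcls a" unfolding hcls_def using assms hsim_refl[of a] by simp
  moreover have "(1::'h) \<in> hcls 1" unfolding hcls_def using hsim_refl[of "1::'h"] by simp
  moreover have "\<not> hsim a 1" using False unfolding hsim_def by simp
  moreover have "\<not> a < 1"
  proof
    assume "a < 1" then have "\<bar>a\<bar> < of_nat 1" using assms by simp
    then show False using False unfolding hbounded_def by blast
  qed
  ultimately show ?thesis unfolding cls_less_def cls_le_def by blast
next
  case True
  have apos: "a > 0" using assms by simp
  have "1 / a \<le> 1 / \<gamma>" using assms by (simp add: frac_le)
  moreover have "1 / a > 0" using apos by simp
  ultimately have "\<bar>1/a\<bar> \<le> \<bar>1/\<gamma>\<bar>" using assms(1) by simp
  then have "hbounded (1 / a)" using assms(3) unfolding hbounded_def by (meson le_less_trans)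
  then have s: "hsim a 1" unfolding hsim_def using True apos by simp
  have "hcls a = hcls 1"
    unfolding hcls_def using s hsim_trans1 hsim_refl
    by (metis (no_types, lifting) hsim_def)
  then show ?thesis unfolding cls_less_def by simp
qed

lemma bowen_mono: "m \<le> n \<Longrightarrow> bowen_ball T n x e \<subseteq> bowen_ball T m x e"
  unfolding bowen_ball_def by auto

lemma rad_nonneg: "rad T x n e \<ge> 0"
proof -
  define S where "S = {r. 0 < r \<and> ball x r \<subseteq> bowen_ball T n x e}"
  have "S \<noteq> {} \<Longrightarrow> bdd_above S \<Longrightarrow> Sup S \<ge> 0"
  proof -
    assume "S \<noteq> {}" "bdd_above S"
    then obtain s where "s \<in> S" by blast
    then have "s \<le> Sup S" "s > 0" using \<open>bdd_above S\<close> cSup_upper[of s S] S_def by auto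
    then show ?thesis by simp
  qed
  then show ?thesis unfolding rad_def S_def[symmetric] Let_def by auto
qed

lemma rad_le: assumes "r > 0" "\<not> ball x r \<subseteq> bowen_ball T n x e" shows "rad T x n e \<le> r"
proof -
  define S where "S = {r. 0 < r \<and> ball x r \<subseteq> bowen_ball T n x e}"
  have sub: "\<forall>s\<in>S. s \<le> r"
  proof
    fix s assume "s \<in> S"
    show "s \<le> r"
    proof (rule ccontr)
      assume "\<not> s \<le> r"
      then have "ball x r \<subseteq> ball x s" by auto
      then show False using \<open>s \<in> S\<close> assms(2) S_def by auto
    qed
  qed
  then have "bdd_above S" by (meson bdd_above.unfold)
  have "S \<noteq> {} \<Longrightarrow> Sup S \<le> r" using sub by (simp add: cSup_least)
  then show ?thesis unfolding rad_def S_def[symmetric] Let_def using \<open>bdd_above S\<close> assms(1) by auto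
qed

lemma rad_ge: assumes "r > 0" "ball x r \<subseteq> bowen_ball T n x e" shows "rad T x n e \<ge> min r 1"
proof -
  define S where "S = {r. 0 < r \<and> ball x r \<subseteq> bowen_ball T n x e}"
  have rS: "r \<in> S" using assms S_def by auto
  have "bdd_above S \<Longrightarrow> Sup S \<ge> r" using rS cSup_upper by auto
  then show ?thesis unfolding rad_def S_def[symmetric] Let_def using rS by auto
qed

theorem mainTheorem4:
  fixes J :: "(nat \<Rightarrow> real) \<Rightarrow> 'h::linordered_field"
    and T :: "'a::metric_space \<Rightarrow> 'a"
  assumes "hyper_J J"
  shows "sensitive T \<longleftrightarrow>
           (\<exists>\<delta>>0. \<forall>x. infinitesimal_R J (\<lambda>i. r_cls J T \<delta> x))"
proof
  assume "sensitive T"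
  then obtain \<delta> where dp: "\<delta> > 0" and sens: "\<And>x U. open U \<Longrightarrow> x \<in> U \<Longrightarrow>
      (\<exists>y\<in>U. \<exists>k::nat. dist ((T ^^ k) x) ((T ^^ k) y) > \<delta>)"
    unfolding sensitive_def by blast
  have "infinitesimal_R J (\<lambda>i. r_cls J T \<delta> x)" for x
  proof -
    define \<rho> where "\<rho> = (\<lambda>n. rad T x n \<delta>)"
    have "cls_less (hcls (J \<rho>)) (hcls 1)"
    proof (rule infl_pos)
      have "J \<rho> \<ge> J (\<lambda>n. 0)" by (rule J_ge_ev[OF assms, of 0]) (simp add: \<rho>_def rad_nonneg)
      then show "0 \<le> J \<rho>" using J_zero[OF assms] by simp
    next
      fix m :: nat assume m0: "m > 0"
      define r where "r = 1 / (2 * real m)"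
      have rp: "r > 0" using m0 r_def by simp
      obtain y k where y: "y \<in> ball x r" and k: "dist ((T ^^ k) x) ((T ^^ k) y) > \<delta>"
        using sens[of "ball x r" x] rp by auto
      have "\<rho> n \<le> r" if "n \<ge> k" for n
      proof -
        have "y \<notin> bowen_ball T n x \<delta>" using k that unfolding bowen_ball_def
          by (auto simp: dist_commute)
        then show ?thesis unfolding \<rho>_def using rad_le[OF rp] y by blast
      qed
      then have "\<And>n. n \<ge> k \<Longrightarrow> 1/2 - real m * \<rho> n \<ge> 0"
        using m0 by (simp add: r_def field_simps)
      then have "J (\<lambda>n. 1/2 - real m * \<rho> n) \<ge> J (\<lambda>n. 0)" by (rule J_ge_ev[OF assms])
      moreover have "J (\<lambda>n. 1/2 - real m * \<rho> n) = J (\<lambda>n. 1/2) - J (\<lambda>n. real m * \<rho> n)"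
        using J_diff[OF assms] .
      moreover have "J (\<lambda>n. real m * \<rho> n) = of_nat m * J \<rho>"
        using J_mult[OF assms, of "\<lambda>n. real m" \<rho>] J_nat[OF assms] by simp
      moreover have "J (\<lambda>n. (1::real)/2) = 1/2"
      proof -
        have "J (\<lambda>n. 2) * J (\<lambda>n. 1/2) = 1" using J_const_inv[OF assms, of 2] by simp
        moreover have "J (\<lambda>n. 2) = 2" using J_nat[OF assms, of 2] by simp
        ultimately show ?thesis by (simp add: field_simps)
      qed
      ultimately have "of_nat m * J \<rho> \<le> 1/2" using J_zero[OF assms] by simp
      then show "J \<rho> * of_nat m < 1" by (simp add: mult.commute)
    qed
    then show ?thesis unfolding infinitesimal_R_def seq_less_def c_cls_def r_cls_def
      J_one[OF assms] \<rho>_def by blast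
  qed
  then show "\<exists>\<delta>>0. \<forall>x. infinitesimal_R J (\<lambda>i. r_cls J T \<delta> x)" using dp by blast
next
  assume "\<exists>\<delta>>0. \<forall>x. infinitesimal_R J (\<lambda>i. r_cls J T \<delta> x)"
  then obtain \<delta> where dp: "\<delta> > 0" and inf: "\<And>x. infinitesimal_R J (\<lambda>i. r_cls J T \<delta> x)"
    by blast
  show "sensitive T" unfolding sensitive_def
  proof (rule exI[of _ \<delta>], rule conjI[OF dp], rule ccontr)
    assume "\<not> (\<forall>x U. open U \<and> x \<in> U \<longrightarrow>
      (\<exists>y\<in>U. \<exists>k::nat. dist ((T ^^ k) x) ((T ^^ k) y) > \<delta>))"
    then obtain x U where U: "open U" "x \<in> U"
      and nd: "\<And>y k. y \<in> U \<Longrightarrow> dist ((T ^^ k) x) ((T ^^ k) y) \<le> \<delta>"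
      by (meson not_less)
    obtain r where rp: "r > 0" and rU: "ball x r \<subseteq> U" using U open_contains_ball by blast
    have bb: "ball x r \<subseteq> bowen_ball T n x \<delta>" for n
      using rU nd unfolding bowen_ball_def by (auto simp: dist_commute)
    define c where "c = min r 1"
    have cp: "c > 0" using rp c_def by simp
    define \<rho> where "\<rho> = (\<lambda>n. rad T x n \<delta>)"
    have "J \<rho> \<ge> J (\<lambda>n. c)"
      by (rule J_ge_ev[OF assms, of 0]) (use rad_ge[OF rp bb] in \<open>simp add: \<rho>_def c_def\<close>)
    moreover have gp: "J (\<lambda>n. c) > 0" using J_const_pos[OF assms cp] .
    moreover have "hbounded (1 / J (\<lambda>n. c))"
    proof -
      have inv: "1 / J (\<lambda>n. c) = J (\<lambda>n. 1/c)"
        using J_const_inv[OF assms, of c] cp gp by (simp add: field_simps)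
      obtain N :: nat where N: "1/c \<le> real N" using real_arch_simple by blast
      have "J (\<lambda>n. 1/c) \<le> J (\<lambda>n. real N)" by (rule J_ge_ev[OF assms, of 0]) (use N in simp)
      then have "J (\<lambda>n. 1/c) \<le> of_nat N" using J_nat[OF assms] by simp
      moreover have "J (\<lambda>n. 1/c) > 0" using inv gp by (metis zero_less_divide_1_iff)
      ultimately have "\<bar>1 / J (\<lambda>n. c)\<bar> < of_nat (N+1)" using inv by simp
      then show ?thesis unfolding hbounded_def by blast
    qed
    ultimately have "\<not> cls_less (hcls (J \<rho>)) (hcls 1)" by (intro infl_neg) auto
    moreover have "cls_less (hcls (J \<rho>)) (hcls 1)"
      using inf[of x] unfolding infinitesimal_R_def seq_less_def c_cls_def r_cls_def
      J_one[OF assms] \<rho>_def by (meson less_add_one)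
    ultimately show False by blast
  qed
qed

end
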